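(* The restriction $\lambda$ of the Lebesgue measure on $\mathbb R$ to the lattice of open subsets of the Sorgenfrey line $\mathbb R_\ell$ is a continuous valuation.
   Context: The Sorgenfrey line $\mathbb R_\ell$ is $\mathbb R$ with the topology generated by the half-open intervals $[a,b[$, $a<b$ (its open sets are Lebesgue measurable). A continuous valuation is a map $\nu:\mathcal OX\to[0,\infty]$ with $\nu(\emptyset)=0$, monotone, modular, and preserving suprema of directed families of open sets. *)

theory Defs
  imports "HOL-Analysis.Analysis"
begin

definition sorgenfrey :: "real topology" where
  "sorgenfrey = topology_generated_by {{a..<b} | a b. a < b}"

definition directed_family :: "'a set set \<Rightarrow> bool" where
  "directed_family D \<longleftrightarrow> D \<noteq> {} \<and> (\<forall>U\<in>D. \<forall>V\<in>D. \<exists>W\<in>D. U \<subseteq> W \<and> V \<subseteq> W)"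

text \<open>Only its values on open sets of X matter.\<close>
definition continuous_valuation :: "'a topology \<Rightarrow> ('a set \<Rightarrow> ennreal) \<Rightarrow> bool" where
  "continuous_valuation X \<nu> \<longleftrightarrow>
     \<nu> {} = 0
   \<and> (\<forall>U V. openin X U \<and> openin X V \<and> U \<subseteq> V \<longrightarrow> \<nu> U \<le> \<nu> V)
   \<and> (\<forall>U V. openin X U \<and> openin X V \<longrightarrow> \<nu> U + \<nu> V = \<nu> (U \<union> V) + \<nu> (U \<inter> V))
   \<and> (\<forall>D. directed_family D \<and> (\<forall>U\<in>D. openin X U) \<longrightarrow> \<nu> (\<Union>D) = (SUP U\<in>D. \<nu> U))"

end

theory Submission
  imports Defs
begin

lemma sorg_open_local:
  assumes "openin sorgenfrey U" "x \<in> U"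
  shows "\<exists>b>x. {x..<b} \<subseteq> U"
proof -
  have "generate_topology_on {{a..<b} | a b. a < (b::real)} U"
    using assms(1) unfolding sorgenfrey_def by (rule openin_topology_generated_by)
  then show ?thesis using assms(2)
  proof (induction arbitrary: x rule: generate_topology_on.induct)
    case Empty then show ?case by simp
  next
    case (Int a b)
    then obtain b1 b2 where "b1 > x" "{x..<b1} \<subseteq> a" "b2 > x" "{x..<b2} \<subseteq> b" by blast
    then show ?case by (intro exI[of _ "min b1 b2"]) auto
  next
    case (UN K)
    then obtain k where "k \<in> K" "x \<in> k" by blast
    with UN.IH[of k x] show ?case by blast
  next
    case (Basis s)
    then obtain a b where "s = {a..<b}" by blast
    with Basis show ?case by (intro exI[of _ b]) auto
  qed
qed

lemma hered_lindelof:
  fixes F :: "real set set"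
  assumes H: "\<And>x. x \<in> \<Union>F \<Longrightarrow> \<exists>b>x. \<exists>U\<in>F. {x..<b} \<subseteq> U"
  shows "\<exists>F'. F' \<subseteq> F \<and> countable F' \<and> \<Union>F' = \<Union>F"
proof -
  define W where "W = \<Union>F"
  define P where "P = (\<lambda>x p. fst p > x \<and> snd p \<in> F \<and> {x..<fst p} \<subseteq> snd p)"
  define b where "b = (\<lambda>x. fst (SOME p. P x p))"
  define Uf where "Uf = (\<lambda>x. snd (SOME p. P x p))"
  have bU: "b x > x \<and> Uf x \<in> F \<and> {x..<b x} \<subseteq> Uf x" if "x \<in> W" for x
  proof -
    from H[of x] that obtain c U where "c > x" "U \<in> F" "{x..<c} \<subseteq> U" unfolding W_def by blast
    then have "P x (c, U)" unfolding P_def by simp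
    then have "P x (SOME p. P x p)" by (rule someI)
    then show ?thesis unfolding P_def b_def Uf_def by simp
  qed
  define E where "E = (\<Union>x\<in>W. {x<..<b x})"
  have "\<And>S. S \<in> (\<lambda>x. {x<..<b x}) ` W \<Longrightarrow> open S" by auto
  then obtain G where G: "G \<subseteq> (\<lambda>x. {x<..<b x}) ` W" "countable G" "\<Union>G = \<Union>((\<lambda>x. {x<..<b x}) ` W)"
    by (rule Lindelof)
  obtain C where C: "countable C" "C \<subseteq> W" "G = (\<lambda>x. {x<..<b x}) ` C"
    using G(1,2) countable_subset_image[of G "\<lambda>x. {x<..<b x}" W] by blast
  define R where "R = W - E"
  define q where "q = (\<lambda>x. SOME r. r \<in> \<rat> \<and> x < r \<and> r < b x)"
  have q: "q x \<in> \<rat> \<and> x < q x \<and> q x < b x" if "x \<in> R" for x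
  proof -
    have "x \<in> W" using that unfolding R_def by simp
    then have "x < b x" using bU by blast
    then obtain r where "r \<in> \<rat>" "x < r" "r < b x" using Rats_dense_in_real by blast
    then have "r \<in> \<rat> \<and> x < r \<and> r < b x" by simp
    then show ?thesis unfolding q_def by (rule someI)
  qed
  have inj: "inj_on q R"
  proof (rule inj_onI)
    fix x y assume xy: "x \<in> R" "y \<in> R" "q x = q y"
    show "x = y"
    proof (rule ccontr)
      assume "x \<noteq> y"
      then consider "x < y" | "y < x" by linarith
      then show False
      proof cases
        case 1
        then have "y \<in> {x<..<b x}" using q[of x] q[of y] xy by auto
        then show False using xy unfolding R_def E_def by auto
      next
        case 2
        then have "x \<in> {y<..<b y}" using q[of x] q[of y] xy by auto
        then show False using xy unfolding R_def E_def by auto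
      qed
    qed
  qed
  have "q ` R \<subseteq> \<rat>" using q by auto
  then have "countable (q ` R)" using countable_rat countable_subset by blast
  then have cR: "countable R" using inj countable_image_inj_on by blast
  define F' where "F' = Uf ` (C \<union> R)"
  have "F' \<subseteq> F" unfolding F'_def R_def using bU C by auto
  moreover have "countable F'" unfolding F'_def using cR C by auto
  moreover have "\<Union>F' = \<Union>F"
  proof
    show "\<Union>F' \<subseteq> \<Union>F" using \<open>F' \<subseteq> F\<close> by auto
  next
    show "\<Union>F \<subseteq> \<Union>F'"
    proof
      fix y assume y: "y \<in> \<Union>F"
      show "y \<in> \<Union>F'"
      proof (cases "y \<in> E")
        case True
        then have "y \<in> \<Union>G" using G(3) unfolding E_def by auto
        then obtain x where "x \<in> C" "y \<in> {x<..<b x}" using C(3) by auto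
        moreover have "x \<in> W" using \<open>x \<in> C\<close> C(2) by auto
        ultimately have "y \<in> Uf x" using bU[of x] by auto
        then show ?thesis using \<open>x \<in> C\<close> unfolding F'_def by auto
      next
        case False
        then have "y \<in> R" using y unfolding R_def W_def by auto
        then have "y \<in> Uf y" using bU[of y] unfolding R_def by auto
        then show ?thesis using \<open>y \<in> R\<close> unfolding F'_def by auto
      qed
    qed
  qed
  ultimately show ?thesis by blast
qed

lemma sorg_meas:
  assumes "openin sorgenfrey U"
  shows "U \<in> sets lebesgue"
proof -
  define F where "F = {{a..<b} | a b. a < b \<and> {a..<b} \<subseteq> U}"
  have UF: "\<Union>F = U"
  proof
    show "\<Union>F \<subseteq> U" unfolding F_def by auto
    show "U \<subseteq> \<Union>F"
    proof
      fix x assume "x \<in> U"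
      then obtain b where "b > x" "{x..<b} \<subseteq> U" using sorg_open_local assms by blast
      then have "{x..<b} \<in> F" unfolding F_def by blast
      moreover have "x \<in> {x..<b}" using \<open>b > x\<close> by simp
      ultimately show "x \<in> \<Union>F" by (rule UnionI)
    qed
  qed
  have "\<exists>F'. F' \<subseteq> F \<and> countable F' \<and> \<Union>F' = \<Union>F"
  proof (rule hered_lindelof)
    fix x assume "x \<in> \<Union>F"
    then obtain b where "b > x" "{x..<b} \<subseteq> U" using sorg_open_local assms UF by blast
    then show "\<exists>b>x. \<exists>U\<in>F. {x..<b} \<subseteq> U" unfolding F_def by blast
  qed
  then obtain F' where F': "F' \<subseteq> F" "countable F'" "\<Union>F' = U" using UF by auto
  have "\<Union>F' \<in> sets lebesgue"
    using F' by (intro sets.countable_Union) (auto simp: F_def)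
  then show ?thesis using F' by simp
qed

theorem corollary4p8:
  shows "continuous_valuation sorgenfrey (\<lambda>U. emeasure lebesgue U)"
  unfolding continuous_valuation_def
proof (intro conjI allI impI)
  show "emeasure lebesgue {} = 0" by simp
next
  fix U V :: "real set" assume "openin sorgenfrey U \<and> openin sorgenfrey V \<and> U \<subseteq> V"
  then show "emeasure lebesgue U \<le> emeasure lebesgue V"
    using sorg_meas by (intro emeasure_mono) auto
next
  fix U V :: "real set" assume "openin sorgenfrey U \<and> openin sorgenfrey V"
  then show "emeasure lebesgue U + emeasure lebesgue V =
      emeasure lebesgue (U \<union> V) + emeasure lebesgue (U \<inter> V)"
    using sorg_meas by (intro emeasure_Un_Int) auto
next
  fix D :: "real set set"
  assume A: "directed_family D \<and> (\<forall>U\<in>D. openin sorgenfrey U)"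
  then have Dne: "D \<noteq> {}" and dir: "\<And>U V. U \<in> D \<Longrightarrow> V \<in> D \<Longrightarrow> \<exists>W\<in>D. U \<subseteq> W \<and> V \<subseteq> W"
    and op: "\<And>U. U \<in> D \<Longrightarrow> openin sorgenfrey U"
    unfolding directed_family_def by auto
  have meas: "\<And>U. U \<in> D \<Longrightarrow> U \<in> sets lebesgue" using op sorg_meas by blast
  have "\<exists>F'. F' \<subseteq> D \<and> countable F' \<and> \<Union>F' = \<Union>D"
  proof (rule hered_lindelof)
    fix x assume "x \<in> \<Union>D"
    then obtain U where U: "U \<in> D" "x \<in> U" by (rule UnionE)
    obtain b where "b > x" "{x..<b} \<subseteq> U" using sorg_open_local[OF op[OF U(1)] U(2)] by (elim exE conjE)
    then show "\<exists>b>x. \<exists>U\<in>D. {x..<b} \<subseteq> U" using U(1) by blast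
  qed
  then obtain F' where F': "F' \<subseteq> D" "countable F'" "\<Union>F' = \<Union>D" by (elim exE conjE)
  have "\<Union>F' \<in> sets lebesgue"
    by (rule sets.countable_Union[OF F'(2)]) (use F'(1) meas in blast)
  then have UDm: "\<Union>D \<in> sets lebesgue" unfolding F'(3) .
  have ge: "(SUP U\<in>D. emeasure lebesgue U) \<le> emeasure lebesgue (\<Union>D)"
  proof (rule SUP_least)
    fix U assume "U \<in> D"
    show "emeasure lebesgue U \<le> emeasure lebesgue (\<Union>D)"
      by (rule emeasure_mono[OF Union_upper[OF \<open>U \<in> D\<close>] UDm])
  qed
  obtain U0 where U0: "U0 \<in> D" using Dne by blast
  define F'' where "F'' = insert U0 F'"
  have F'': "F'' \<subseteq> D" "countable F''" "\<Union>F'' = \<Union>D" "F'' \<noteq> {}"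
    using F' U0 unfolding F''_def by (simp_all, blast)
  define f where "f = from_nat_into F''"
  have f: "f n \<in> D" for n
  proof -
    have "f n \<in> F''" unfolding f_def by (rule from_nat_into[OF F''(4)])
    then show ?thesis using F''(1) by blast
  qed
  have rf: "range f = F''" unfolding f_def by (rule range_from_nat_into[OF F''(4) F''(2)])
  define g where "g = (\<lambda>U V. SOME W. W \<in> D \<and> U \<subseteq> W \<and> V \<subseteq> W)"
  have g: "g U V \<in> D \<and> U \<subseteq> g U V \<and> V \<subseteq> g U V" if UV: "U \<in> D" "V \<in> D" for U V
  proof -
    obtain W where "W \<in> D" "U \<subseteq> W" "V \<subseteq> W" using dir[OF UV] by blast
    then have "W \<in> D \<and> U \<subseteq> W \<and> V \<subseteq> W" by simp
    then show ?thesis unfolding g_def by (rule someI)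
  qed
  define V where "V = rec_nat (f 0) (\<lambda>n W. g W (f (Suc n)))"
  have V0: "V 0 = f 0" and VS: "\<And>n. V (Suc n) = g (V n) (f (Suc n))" unfolding V_def by simp_all
  have VD: "\<And>n. V n \<in> D"
  proof -
    fix n show "V n \<in> D"
    proof (induction n)
      case 0 show ?case unfolding V0 by (rule f)
    next
      case (Suc m) show ?case unfolding VS using g[OF Suc f[of "Suc m"]] by blast
    qed
  qed
  have fV: "\<And>n. f n \<subseteq> V n"
  proof -
    fix n show "f n \<subseteq> V n"
    proof (cases n)
      case 0 show ?thesis unfolding 0 V0 by (rule order_refl)
    next
      case (Suc m) show ?thesis unfolding Suc VS using g[OF VD[of m] f[of "Suc m"]] by blast
    qed
  qed
  have inc: "incseq V" unfolding incseq_Suc_iff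
  proof
    fix n show "V n \<subseteq> V (Suc n)" unfolding VS using g[OF VD[of n] f[of "Suc n"]] by blast
  qed
  have UV: "(\<Union>n. V n) = \<Union>D"
  proof
    show "(\<Union>n. V n) \<subseteq> \<Union>D" using VD by auto
    have "\<Union>D = \<Union>F''" using F''(3) by (rule sym)
    also have "\<dots> = (\<Union>n. f n)" using rf by (rule arg_cong[of _ _ Union, symmetric])
    also have "\<dots> \<subseteq> (\<Union>n. V n)" using fV by auto
    finally show "\<Union>D \<subseteq> (\<Union>n. V n)" .
  qed
  have "range V \<subseteq> sets lebesgue" using VD meas by blast
  then have "(SUP n. emeasure lebesgue (V n)) = emeasure lebesgue (\<Union>n. V n)"
    by (rule SUP_emeasure_incseq[OF _ inc])
  then have "emeasure lebesgue (\<Union>D) = (SUP n. emeasure lebesgue (V n))"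
    unfolding UV by (rule sym)
  also have "\<dots> \<le> (SUP U\<in>D. emeasure lebesgue U)"
    by (rule SUP_least) (rule SUP_upper[OF VD])
  finally show "emeasure lebesgue (\<Union>D) = (SUP U\<in>D. emeasure lebesgue U)"
    using ge by (rule antisym)
qed

end
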